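(* Let $\mathcal{E}=\{e_1,\dots,e_n\}$ be an orthonormal basis for $\mathbb{R}^n$ and let $M$ be a $k$-dimensional maximal $\mathcal{E}$-PR subspace with $k<[(n+1)/2]$. Then $k=\min\{|\mathrm{supp}(x)|:0\neq x\in M\}$.
   Context: $[a]$ is the integer part of $a$. For $x=\sum_{i=1}^n\alpha_ie_i$, $\mathrm{supp}(x)=\{i:\alpha_i\neq0\}$. A subspace $M$ is an $\mathcal{E}$-PR subspace if $\{P_Me_i\}_{i=1}^n$ (with $P_M$ the orthogonal projection onto $M$) spans $M$ and whenever $x,y\in M$ satisfy $|\langle x,P_Me_i\rangle|=|\langle y,P_Me_i\rangle|$ for all $i$, then $x=\pm y$. It is maximal if it is not a proper subspace of another $\mathcal{E}$-PR subspace. *)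

theory Defs
  imports "HOL-Analysis.Analysis"
begin

text \<open>Orthonormal basis of R^n, indexed by the finite type 'n (n = CARD('n)).\<close>
definition orthonormal_basis :: "('n::finite \<Rightarrow> real^'n) \<Rightarrow> bool" where
  "orthonormal_basis e \<longleftrightarrow> (\<forall>i j. e i \<bullet> e j = (if i = j then 1 else 0))"

definition orth_proj :: "(real^'n::finite) set \<Rightarrow> real^'n \<Rightarrow> real^'n" where
  "orth_proj M x = (THE y. y \<in> M \<and> (\<forall>z\<in>M. (x - y) \<bullet> z = 0))"

text \<open>Support of x with respect to the basis e: indices of nonzero coefficients
  (the coefficient of e i in x is x \<bullet> e i for an orthonormal basis).\<close>
definition supp_wrt :: "('n::finite \<Rightarrow> real^'n) \<Rightarrow> real^'n \<Rightarrow> 'n set" where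
  "supp_wrt e x = {i. x \<bullet> e i \<noteq> 0}"

definition PR_subspace :: "('n::finite \<Rightarrow> real^'n) \<Rightarrow> (real^'n) set \<Rightarrow> bool" where
  "PR_subspace e M \<longleftrightarrow> subspace M \<and>
     span (range (\<lambda>i. orth_proj M (e i))) = M \<and>
     (\<forall>x\<in>M. \<forall>y\<in>M.
        (\<forall>i. \<bar>x \<bullet> orth_proj M (e i)\<bar> = \<bar>y \<bullet> orth_proj M (e i)\<bar>) \<longrightarrow> x = y \<or> x = - y)"

definition maximal_PR_subspace :: "('n::finite \<Rightarrow> real^'n) \<Rightarrow> (real^'n) set \<Rightarrow> bool" where
  "maximal_PR_subspace e M \<longleftrightarrow> PR_subspace e M \<and> \<not> (\<exists>M'. PR_subspace e M' \<and> M \<subset> M')"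

end

theory Submission
  imports Defs
begin

lemma onb_inj:
  assumes "orthonormal_basis e" shows "inj e"
proof (rule injI)
  fix i j assume "e i = e j"
  then have "e i \<bullet> e j = 1" using assms unfolding orthonormal_basis_def by metis
  then show "i = j" using assms unfolding orthonormal_basis_def by (metis zero_neq_one)
qed

lemma onb_indep:
  assumes "orthonormal_basis e" shows "independent (range e)"
proof (rule pairwise_orthogonal_independent)
  show "pairwise orthogonal (range e)"
    using assms unfolding orthonormal_basis_def pairwise_def orthogonal_def
    by (metis (no_types, lifting) rangeE)
  show "0 \<notin> range e"
    using assms unfolding orthonormal_basis_def by (metis inner_zero_left rangeE zero_neq_one)
qed

lemma onb_span:
  assumes "orthonormal_basis e" shows "span (range e) = UNIV"
proof -
  have "card (range e) = CARD('a)"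
    using onb_inj[OF assms] by (simp add: card_image)
  then have "UNIV \<subseteq> span (range e)"
    by (intro card_ge_dim_independent onb_indep[OF assms]) (auto simp: dim_subset_UNIV_cart)
  then show ?thesis by auto
qed

lemma onb_zero:
  assumes "orthonormal_basis e" "\<And>i. x \<bullet> e i = 0" shows "x = 0"
proof -
  have "x \<in> span (range e)" using onb_span[OF assms(1)] by auto
  then have "orthogonal x x"
    by (rule orthogonal_to_span) (use assms(2) in \<open>auto simp: orthogonal_def\<close>)
  then show ?thesis by (simp add: orthogonal_def)
qed

lemma orth_proj_props:
  assumes "subspace M"
  shows "orth_proj M v \<in> M \<and> (\<forall>z\<in>M. (v - orth_proj M v) \<bullet> z = 0)"
proof -
  have sM: "span M = M" using assms by simp
  obtain y z where y: "y \<in> span M" and z: "\<And>w. w \<in> span M \<Longrightarrow> orthogonal z w" and v: "v = y + z"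
    using orthogonal_subspace_decomp_exists by blast
  have P: "y \<in> M \<and> (\<forall>w\<in>M. (v - y) \<bullet> w = 0)"
    using y z v sM by (auto simp: orthogonal_def)
  have U: "y' = y" if "y' \<in> M \<and> (\<forall>w\<in>M. (v - y') \<bullet> w = 0)" for y'
  proof -
    have d: "y' - y \<in> M" using that P assms by (simp add: subspace_diff)
    have "(y' - y) \<bullet> (y' - y) = ((v - y) - (v - y')) \<bullet> (y' - y)" by (simp add: algebra_simps)
    also have "\<dots> = 0" using that P d by (simp add: inner_diff_left)
    finally show ?thesis by simp
  qed
  have "orth_proj M v = y" unfolding orth_proj_def
    using P U by (rule the_equality)
  then show ?thesis using P by simp
qed

lemma orth_proj_inner:
  assumes "subspace M" "x \<in> M" shows "x \<bullet> orth_proj M v = x \<bullet> v"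
proof -
  have "(v - orth_proj M v) \<bullet> x = 0" using orth_proj_props[OF assms(1)] assms(2) by blast
  then show ?thesis by (simp add: inner_diff_left inner_diff_right inner_commute)
qed

lemma proj_span:
  assumes "orthonormal_basis e" "subspace M"
  shows "span (range (\<lambda>i. orth_proj M (e i))) = M"
proof
  show "span (range (\<lambda>i. orth_proj M (e i))) \<subseteq> M"
    using orth_proj_props[OF assms(2)] assms(2) by (intro span_minimal) auto
  show "M \<subseteq> span (range (\<lambda>i. orth_proj M (e i)))"
  proof
    fix x assume x: "x \<in> M"
    let ?N = "range (\<lambda>i. orth_proj M (e i))"
    obtain y z where y: "y \<in> span ?N" and z: "\<And>w. w \<in> span ?N \<Longrightarrow> orthogonal z w" and xe: "x = y + z"
      using orthogonal_subspace_decomp_exists by blast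
    have yM: "y \<in> M" using y \<open>span ?N \<subseteq> M\<close> by blast
    have zM: "z \<in> M" using xe x yM assms(2)
      by (metis add_diff_cancel_left' subspace_diff)
    have "z \<bullet> e i = 0" for i
    proof -
      have "z \<bullet> orth_proj M (e i) = 0" using z[of "orth_proj M (e i)"] by (auto simp: orthogonal_def span_base)
      then show ?thesis using orth_proj_inner[OF assms(2) zM] by simp
    qed
    then have "z = 0" using onb_zero[OF assms(1)] by blast
    then show "x \<in> span ?N" using xe y by simp
  qed
qed

lemma PR_char:
  assumes "orthonormal_basis e"
  shows "PR_subspace e M \<longleftrightarrow> subspace M \<and>
     (\<forall>u\<in>M. \<forall>v\<in>M. (\<forall>i. u \<bullet> e i = 0 \<or> v \<bullet> e i = 0) \<longrightarrow> u = 0 \<or> v = 0)"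
proof (cases "subspace M")
  case False then show ?thesis unfolding PR_subspace_def by simp
next
  case sM: True
  have eq: "(\<forall>x\<in>M. \<forall>y\<in>M.
        (\<forall>i. \<bar>x \<bullet> orth_proj M (e i)\<bar> = \<bar>y \<bullet> orth_proj M (e i)\<bar>) \<longrightarrow> x = y \<or> x = - y)
     \<longleftrightarrow> (\<forall>x\<in>M. \<forall>y\<in>M. (\<forall>i. \<bar>x \<bullet> e i\<bar> = \<bar>y \<bullet> e i\<bar>) \<longrightarrow> x = y \<or> x = - y)"
    using orth_proj_inner[OF sM] by simp
  have main: "(\<forall>x\<in>M. \<forall>y\<in>M. (\<forall>i. \<bar>x \<bullet> e i\<bar> = \<bar>y \<bullet> e i\<bar>) \<longrightarrow> x = y \<or> x = - y)
     \<longleftrightarrow> (\<forall>u\<in>M. \<forall>v\<in>M. (\<forall>i. u \<bullet> e i = 0 \<or> v \<bullet> e i = 0) \<longrightarrow> u = 0 \<or> v = 0)"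
  proof
    assume H: "\<forall>x\<in>M. \<forall>y\<in>M. (\<forall>i. \<bar>x \<bullet> e i\<bar> = \<bar>y \<bullet> e i\<bar>) \<longrightarrow> x = y \<or> x = - y"
    show "\<forall>u\<in>M. \<forall>v\<in>M. (\<forall>i. u \<bullet> e i = 0 \<or> v \<bullet> e i = 0) \<longrightarrow> u = 0 \<or> v = 0"
    proof (intro ballI impI)
      fix u v assume u: "u \<in> M" and v: "v \<in> M" and d: "\<forall>i. u \<bullet> e i = 0 \<or> v \<bullet> e i = 0"
      have "\<bar>(u + v) \<bullet> e i\<bar> = \<bar>(u - v) \<bullet> e i\<bar>" for i
        using d[rule_format, of i] by (auto simp: inner_add_left inner_diff_left)
      moreover have "u + v \<in> M" "u - v \<in> M" using u v sM by (auto simp: subspace_add subspace_diff)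
      ultimately have "u + v = u - v \<or> u + v = - (u - v)" using H by blast
      then show "u = 0 \<or> v = 0"
      proof
        assume "u + v = u - v" then have "v + v = 0" by (simp add: algebra_simps)
        then have "v = 0" by (metis scaleR_2 scaleR_eq_0_iff zero_neq_numeral)
        then show ?thesis by simp
      next
        assume "u + v = - (u - v)" then have "u + u = 0" by (simp add: algebra_simps)
        then have "u = 0" by (metis scaleR_2 scaleR_eq_0_iff zero_neq_numeral)
        then show ?thesis by simp
      qed
    qed
  next
    assume H: "\<forall>u\<in>M. \<forall>v\<in>M. (\<forall>i. u \<bullet> e i = 0 \<or> v \<bullet> e i = 0) \<longrightarrow> u = 0 \<or> v = 0"
    show "\<forall>x\<in>M. \<forall>y\<in>M. (\<forall>i. \<bar>x \<bullet> e i\<bar> = \<bar>y \<bullet> e i\<bar>) \<longrightarrow> x = y \<or> x = - y"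
    proof (intro ballI impI)
      fix x y assume x: "x \<in> M" and y: "y \<in> M" and a: "\<forall>i. \<bar>x \<bullet> e i\<bar> = \<bar>y \<bullet> e i\<bar>"
      have "(x - y) \<bullet> e i = 0 \<or> (x + y) \<bullet> e i = 0" for i
        using a[rule_format, of i] by (auto simp: inner_add_left inner_diff_left abs_eq_iff)
      moreover have "x + y \<in> M" "x - y \<in> M" using x y sM by (auto simp: subspace_add subspace_diff)
      ultimately have "x - y = 0 \<or> x + y = 0" using H by blast
      then show "x = y \<or> x = - y" by (auto simp: add_eq_0_iff)
    qed
  qed
  show ?thesis unfolding PR_subspace_def using sM eq main proj_span[OF assms sM] by simp
qed


definition Rs :: "('n::finite \<Rightarrow> real^'n) \<Rightarrow> 'n set \<Rightarrow> (real^'n) set" where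
  "Rs e A = {x. \<forall>i. i \<notin> A \<longrightarrow> x \<bullet> e i = 0}"

definition msum :: "(real^'n::finite) set \<Rightarrow> (real^'n) set \<Rightarrow> (real^'n) set" where
  "msum S T = {x + y |x y. x \<in> S \<and> y \<in> T}"

lemma Rs_sub: "subspace (Rs e A)"
  unfolding subspace_def Rs_def by (auto simp: inner_add_left)

lemma Rs_zero: "0 \<in> Rs e A"
  unfolding Rs_def by simp

lemma Rs_card:
  assumes "orthonormal_basis e" shows "card A \<le> dim (Rs e A)"
proof -
  have "e ` A \<subseteq> Rs e A" using assms unfolding Rs_def orthonormal_basis_def by auto
  moreover have "independent (e ` A)"
    using onb_indep[OF assms] by (rule independent_mono) auto
  ultimately have "card (e ` A) \<le> dim (Rs e A)" by (rule independent_card_le_dim)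
  moreover have "card (e ` A) = card A"
    using onb_inj[OF assms] by (simp add: card_image inj_on_subset)
  ultimately show ?thesis by simp
qed

lemma Rs_Int:
  assumes "orthonormal_basis e" shows "Rs e A \<inter> Rs e (-A) = {0}"
proof -
  have "x = 0" if "x \<in> Rs e A" "x \<in> Rs e (-A)" for x
    using that by (intro onb_zero[OF assms]) (auto simp: Rs_def)
  then show ?thesis using Rs_zero by blast
qed

lemma sums_sub: "subspace S \<Longrightarrow> subspace T \<Longrightarrow> subspace (msum S T)"
  unfolding msum_def by (rule subspace_sums)

lemma sums_le: "subspace S \<Longrightarrow> subspace T \<Longrightarrow> dim (msum S T) \<le> dim S + dim T"
proof -
  assume a: "subspace S" "subspace T"
  show ?thesis using dim_sums_Int[OF a] unfolding msum_def by linarith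
qed

lemma sums_mono: "S \<subseteq> S' \<Longrightarrow> T \<subseteq> T' \<Longrightarrow> msum S T \<subseteq> msum S' T'"
  unfolding msum_def by blast

lemma sums_left: "subspace T \<Longrightarrow> S \<subseteq> msum S T"
proof
  fix x assume "subspace T" "x \<in> S"
  then have "x = x + 0 \<and> x \<in> S \<and> 0 \<in> T" by (simp add: subspace_0)
  then show "x \<in> msum S T" unfolding msum_def by blast
qed

lemma Rs_dims:
  assumes "orthonormal_basis e"
  shows "dim (Rs e A) + dim (Rs e (-A)) = dim (msum (Rs e A) (Rs e (-A)))"
  using dim_sums_Int[OF Rs_sub Rs_sub, of e A e "-A"] Rs_Int[OF assms, of A]
  unfolding msum_def by simp

lemma Rs_dims_le:
  fixes e :: "'n::finite \<Rightarrow> real^'n"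
  assumes "orthonormal_basis e"
  shows "dim (Rs e A) + dim (Rs e (-A)) \<le> CARD('n)"
  using Rs_dims[OF assms, of A] dim_subset_UNIV_cart[of "msum (Rs e A) (Rs e (-A))"] by simp

lemma card_compl_sum: "card (A::'n::finite set) + card (-A) = CARD('n)"
proof -
  have "card (A \<union> -A) = card A + card (-A)" by (rule card_Un_disjoint) auto
  then show ?thesis by simp
qed

lemma solve_w:
  assumes "subspace M" "subspace R" "y \<in> R" "y - t *\<^sub>R w \<in> M" "t \<noteq> 0"
  shows "w \<in> msum M R"
proof -
  have "w = (- (1/t)) *\<^sub>R (y - t *\<^sub>R w) + (1/t) *\<^sub>R y"
    using assms(5) by (simp add: algebra_simps)
  moreover have "(- (1/t)) *\<^sub>R (y - t *\<^sub>R w) \<in> M" by (rule subspace_scale[OF assms(1) assms(4)])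
  moreover have "(1/t) *\<^sub>R y \<in> R" using assms by (simp add: subspace_scale)
  ultimately show ?thesis unfolding msum_def by blast
qed


lemma sums_right: "subspace S \<Longrightarrow> T \<subseteq> msum S T"
proof
  fix x assume "subspace S" "x \<in> T"
  then have "x = 0 + x \<and> 0 \<in> S \<and> x \<in> T" by (simp add: subspace_0)
  then show "x \<in> msum S T" unfolding msum_def by blast
qed

lemma msum_Int: "subspace S \<Longrightarrow> subspace T \<Longrightarrow> dim (msum S T) + dim (S \<inter> T) = dim S + dim T"
  unfolding msum_def by (rule dim_sums_Int)

theorem theorem4p6:
  fixes e :: "'n::finite \<Rightarrow> real^'n" and M :: "(real^'n) set" and k :: nat
  assumes "orthonormal_basis e"
    and "maximal_PR_subspace e M"
    and "dim M = k"
    and "k < (CARD('n) + 1) div 2"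
  shows "k = Min {card (supp_wrt e x) | x. x \<in> M \<and> x \<noteq> 0}"
proof -
  note onb = assms(1) and dM = assms(3) and kn = assms(4)
  have PRM0: "PR_subspace e M" and nomax: "\<not> (\<exists>M'. PR_subspace e M' \<and> M \<subset> M')"
    using assms(2) unfolding maximal_PR_subspace_def by auto
  have sM: "subspace M" using PRM0 unfolding PR_subspace_def by simp
  have PRM: "u = 0 \<or> v = 0" if "u \<in> M" "v \<in> M" "\<forall>i. u \<bullet> e i = 0 \<or> v \<bullet> e i = 0" for u v
    using PRM0 PR_char[OF onb] that by blast
  have k2: "2 * k < CARD('n)" using kn by presburger
  have lowb: "k \<le> card (supp_wrt e x)" if x: "x \<in> M" "x \<noteq> 0" for x
  proof (rule ccontr)
    assume nl: "\<not> ?thesis"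
    define T where "T = supp_wrt e x"
    have cT: "card T < k" using nl T_def by simp
    let ?N = "M \<inter> Rs e (-T)"
    have "dim (msum M (Rs e (-T))) + dim ?N = dim M + dim (Rs e (-T))"
      using msum_Int[OF sM Rs_sub] by simp
    moreover have "dim (msum M (Rs e (-T))) \<le> CARD('n)" by (rule dim_subset_UNIV_cart)
    moreover have "card (-T) \<le> dim (Rs e (-T))" by (rule Rs_card[OF onb])
    moreover have "card T + card (-T) = CARD('n)" by (rule card_compl_sum)
    ultimately have "dim ?N \<noteq> 0" using cT dM by linarith
    then obtain y where y: "y \<in> ?N" "y \<noteq> 0" using dim_eq_0[of ?N] by auto
    have "\<forall>i. x \<bullet> e i = 0 \<or> y \<bullet> e i = 0"
      using y(1) unfolding Rs_def T_def supp_wrt_def by auto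
    then show False using PRM[OF x(1)] y x by auto
  qed
  have ex: "\<exists>x\<in>M. x \<noteq> 0 \<and> card (supp_wrt e x) \<le> k"
  proof (rule ccontr)
    assume "\<not> ?thesis"
    then have H: "\<And>x. x \<in> M \<Longrightarrow> x \<noteq> 0 \<Longrightarrow> k + 1 \<le> card (supp_wrt e x)" by force
    define Bad where "Bad A = (if M \<inter> Rs e A \<subseteq> {0}
        then msum M (Rs e A) \<inter> msum M (Rs e (-A)) else msum M (Rs e (-A)))" for A
    have dimBad: "dim (Bad A) < CARD('n)" for A
    proof (cases "M \<inter> Rs e A \<subseteq> {0}")
      case True
      let ?X = "msum M (Rs e A)" and ?Y = "msum M (Rs e (-A))"
      have sX: "subspace ?X" "subspace ?Y" using sums_sub sM Rs_sub by auto
      have 1: "dim (msum ?X ?Y) + dim (?X \<inter> ?Y) = dim ?X + dim ?Y"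
        by (rule msum_Int[OF sX])
      have 2: "dim ?X \<le> k + dim (Rs e A)" using sums_le[OF sM Rs_sub] dM by simp
      have 3: "dim ?Y \<le> k + dim (Rs e (-A))" using sums_le[OF sM Rs_sub] dM by simp
      have "msum (Rs e A) (Rs e (-A)) \<subseteq> msum ?X ?Y"
        by (rule sums_mono) (auto intro: sums_right[OF sM, THEN subsetD])
      then have "dim (msum (Rs e A) (Rs e (-A))) \<le> dim (msum ?X ?Y)" by (rule dim_subset)
      then have 4: "dim (Rs e A) + dim (Rs e (-A)) \<le> dim (msum ?X ?Y)" using Rs_dims[OF onb, of A] by simp
      have "dim (?X \<inter> ?Y) \<le> 2 * k" using 1 2 3 4 by linarith
      then show ?thesis using True k2 unfolding Bad_def by simp
    next
      case False
      then obtain z where z: "z \<in> M" "z \<in> Rs e A" "z \<noteq> 0" by auto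
      have "supp_wrt e z \<subseteq> A" using z(2) unfolding Rs_def supp_wrt_def by auto
      then have "card (supp_wrt e z) \<le> card A" by (rule card_mono[rotated]) simp
      then have cA: "k + 1 \<le> card A" using H[OF z(1) z(3)] by simp
      have "dim (msum M (Rs e (-A))) \<le> k + dim (Rs e (-A))" using sums_le[OF sM Rs_sub] dM by simp
      moreover have "dim (Rs e A) + dim (Rs e (-A)) \<le> CARD('n)" by (rule Rs_dims_le[OF onb])
      moreover have "card A \<le> dim (Rs e A)" by (rule Rs_card[OF onb])
      ultimately show ?thesis using False cA unfolding Bad_def by simp
    qed
    have "negligible (\<Union>(range Bad))"
    proof (rule negligible_Union)
      show "finite (range Bad)" by simp
      show "negligible T" if "T \<in> range Bad" for T
        using that dimBad by (auto intro!: negligible_lowdim)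
    qed
    then obtain w where w: "w \<notin> \<Union>(range Bad)"
      using negligible_subset[of "\<Union>(range Bad)" UNIV] non_negligible_UNIV by blast
    have MB: "M \<subseteq> Bad A" for A
      unfolding Bad_def using sums_left[OF Rs_sub, of M] by auto
    have wM: "w \<notin> M" using w MB by blast
    define M' where "M' = span (insert w M)"
    have sM': "subspace M'" unfolding M'_def by simp
    have MM': "M \<subset> M'" using wM unfolding M'_def by (auto intro: span_base)
    have spM: "span M = M" using sM by simp
    have decomp: "\<exists>t. u - t *\<^sub>R w \<in> M" if "u \<in> M'" for u
      using that unfolding M'_def span_insert spM by simp
    have "PR_subspace e M'"
      unfolding PR_char[OF onb]
    proof (intro conjI ballI impI sM')
      fix u v assume u: "u \<in> M'" and v: "v \<in> M'" and d: "\<forall>i. u \<bullet> e i = 0 \<or> v \<bullet> e i = 0"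
      show "u = 0 \<or> v = 0"
      proof (rule ccontr)
        assume nz: "\<not> (u = 0 \<or> v = 0)"
        obtain t1 where t1: "u - t1 *\<^sub>R w \<in> M" using decomp[OF u] by blast
        obtain t2 where t2: "v - t2 *\<^sub>R w \<in> M" using decomp[OF v] by blast
        define A where "A = supp_wrt e u"
        have uA: "u \<in> Rs e A" unfolding Rs_def A_def supp_wrt_def by auto
        have vA: "v \<in> Rs e (-A)" using d unfolding Rs_def A_def supp_wrt_def by auto
        have "w \<in> Bad A"
        proof (cases "M \<inter> Rs e A \<subseteq> {0}")
          case False
          then obtain z where z: "z \<in> M" "z \<in> Rs e A" "z \<noteq> 0" by auto
          show ?thesis
          proof (cases "t2 = 0")
            case True
            then have "v \<in> M" using t2 by simp
            moreover have "\<forall>i. z \<bullet> e i = 0 \<or> v \<bullet> e i = 0" using z(2) vA unfolding Rs_def by auto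
            ultimately have "z = 0 \<or> v = 0" using PRM z(1) by blast
            then show ?thesis using z nz by auto
          next
            case t2z: False
            have "w \<in> msum M (Rs e (-A))" by (rule solve_w[OF sM Rs_sub vA t2 t2z])
            then show ?thesis unfolding Bad_def using False by simp
          qed
        next
          case True
          have "t1 \<noteq> 0"
          proof
            assume "t1 = 0"
            then have "u \<in> M" using t1 by simp
            then show False using True uA nz by auto
          qed
          then have wX: "w \<in> msum M (Rs e A)" by (rule solve_w[OF sM Rs_sub uA t1])
          show ?thesis
          proof (cases "M \<inter> Rs e (-A) \<subseteq> {0}")
            case False
            then have "Bad (-A) = msum M (Rs e A)" unfolding Bad_def by simp
            then have "w \<in> Bad (-A)" using wX by simp
            then show ?thesis using w by blast
          next
            case True2: True
            have "t2 \<noteq> 0"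
            proof
              assume "t2 = 0"
              then have "v \<in> M" using t2 by simp
              then show False using True2 vA nz by auto
            qed
            then have wY: "w \<in> msum M (Rs e (-A))" by (rule solve_w[OF sM Rs_sub vA t2])
            show ?thesis using wX wY True unfolding Bad_def by simp
          qed
        qed
        then show False using w by blast
      qed
    qed
    then show False using nomax MM' by blast
  qed
  then obtain x0 where x0: "x0 \<in> M" "x0 \<noteq> 0" "card (supp_wrt e x0) \<le> k" by blast
  have x0k: "card (supp_wrt e x0) = k" using x0 lowb[OF x0(1) x0(2)] by simp
  let ?S = "{card (supp_wrt e x) | x. x \<in> M \<and> x \<noteq> 0}"
  have "?S \<subseteq> {..CARD('n)}" by (auto intro: card_mono)
  then have fS: "finite ?S" by (rule finite_subset) simp
  have "Min ?S = k"
  proof (rule Min_eqI[OF fS])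
    show "y \<ge> k" if "y \<in> ?S" for y using that lowb by auto
    show "k \<in> ?S" using x0 x0k by blast
  qed
  then show ?thesis by simp
qed

end
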